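(* Under the standing assumptions, let $\{x_i\}_{i=1}^N$ be a solution of the delayed Hegselmann–Krause system. Then for every $n\in\mathbb{N}_0$ and all $i,j=1,\dots,N$, $$|x_i(s)-x_j(t)|\le D_n\qquad\text{for all } s,t\ge n\bar\tau-\bar\tau.$$ In particular $|x_i(s)-x_j(t)|\le D_0$ for all $s,t\ge-\bar\tau$, and $D_{n+1}\le D_n$ for all $n\in\mathbb{N}_0$.
   Context: Standing assumptions: $N\ge 2$, $d\ge 1$, $\bar\tau>0$; $\tau:[0,\infty)\to[0,\bar\tau]$ continuous; $\psi:\mathbb{R}^d\times\mathbb{R}^d\to\mathbb{R}$ continuous, bounded and strictly positive, $K:=\|\psi\|_\infty$; initial data $x_i^0:[-\bar\tau,0]\to\mathbb{R}^d$ continuous. The delayed Hegselmann–Krause system is $$\frac{d}{dt}x_i(t)=\frac{1}{N-1}\sum_{j\ne i}\psi\big(x_i(t),x_j(t-\tau(t))\big)\big(x_j(t-\tau(t))-x_i(t)\big),\quad t>0,$$ with $x_i=x_i^0$ on $[-\bar\tau,0]$; a solution means continuous $x_i:[-\bar\tau,\infty)\to\mathbb{R}^d$, differentiable on $(0,\infty)$, satisfying this. $\mathbb{N}_0=\{0,1,2,\dots\}$. For $n\in\mathbb{N}_0$, $D_n:=\max_{i,j=1,\dots,N}\max_{s,t\in[n\bar\tau-\bar\tau,\,n\bar\tau]}|x_i(s)-x_j(t)|$. *)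

theory Defs
  imports "HOL-Analysis.Analysis"
begin

definition dHK_solution ::
  "nat \<Rightarrow> real \<Rightarrow> (real \<Rightarrow> real) \<Rightarrow> ('a::euclidean_space \<Rightarrow> 'a \<Rightarrow> real)
   \<Rightarrow> (nat \<Rightarrow> real \<Rightarrow> 'a) \<Rightarrow> (nat \<Rightarrow> real \<Rightarrow> 'a) \<Rightarrow> bool" where
  "dHK_solution N taubar tau psi x0 x \<longleftrightarrow>
     (\<forall>i\<in>{1..N}. continuous_on {-taubar..} (x i)
        \<and> (\<forall>t\<in>{-taubar..0}. x i t = x0 i t)
        \<and> (\<forall>t>0. (x i has_vector_derivative
              ((1 / (real N - 1)) *\<^sub>R
                (\<Sum>j\<in>{1..N}-{i}. psi (x i t) (x j (t - tau t)) *\<^sub>R (x j (t - tau t) - x i t))))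
              (at t)))"

definition diamD ::
  "nat \<Rightarrow> real \<Rightarrow> (nat \<Rightarrow> real \<Rightarrow> 'a::euclidean_space) \<Rightarrow> nat \<Rightarrow> real" where
  "diamD N taubar x n =
     (SUP p\<in>{1..N} \<times> {1..N} \<times> {real n * taubar - taubar .. real n * taubar} \<times> {real n * taubar - taubar .. real n * taubar}.
        (case p of (i, j, s, t) \<Rightarrow> norm (x i s - x j t)))"

end

theory Submission
  imports Defs
begin

lemma barrier:
  fixes N :: nat and taubar :: real and tau :: "real \<Rightarrow> real"
    and psi :: "'a::euclidean_space \<Rightarrow> 'a \<Rightarrow> real"
    and x0 x :: "nat \<Rightarrow> real \<Rightarrow> 'a"
  assumes N2: "N \<ge> 2" and tb: "taubar > 0"
    and tau: "\<And>t. t \<ge> 0 \<Longrightarrow> 0 \<le> tau t \<and> tau t \<le> taubar"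
    and pos: "\<And>u v. psi u v > 0"
    and sol: "dHK_solution N taubar tau psi x0 x"
    and bd: "\<And>k r. k \<in> {1..N} \<Longrightarrow> r \<in> {real n * taubar - taubar .. real n * taubar} \<Longrightarrow> v \<bullet> x k r \<le> M"
    and kk: "k \<in> {1..N}" and rr: "r \<ge> real n * taubar - taubar"
  shows "v \<bullet> x k r \<le> M"
proof -
  define c where "c = real n * taubar"
  define a where "a = c - taubar"
  have c0: "c \<ge> 0" using tb by (simp add: c_def)
  have bd': "\<And>k r. k \<in> {1..N} \<Longrightarrow> a \<le> r \<Longrightarrow> r \<le> c \<Longrightarrow> v \<bullet> x k r \<le> M"
    using bd by (auto simp: a_def c_def)
  define F where "F k t = (1 / (real N - 1)) *\<^sub>R
                (\<Sum>j\<in>{1..N}-{k}. psi (x k t) (x j (t - tau t)) *\<^sub>R (x j (t - tau t) - x k t))" for k t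
  have cont: "\<And>k. k \<in> {1..N} \<Longrightarrow> continuous_on {-taubar..} (\<lambda>t. v \<bullet> x k t)"
    using sol unfolding dHK_solution_def by (auto intro!: continuous_intros)
  have der: "\<And>k t. k \<in> {1..N} \<Longrightarrow> t > 0 \<Longrightarrow> ((\<lambda>t. v \<bullet> x k t) has_real_derivative (v \<bullet> F k t)) (at t)"
  proof -
    fix k t assume k: "k \<in> {1..N}" and t: "t > (0::real)"
    have "(x k has_vector_derivative F k t) (at t)"
      using sol k t unfolding dHK_solution_def F_def by auto
    then have "((\<lambda>t. v \<bullet> x k t) has_vector_derivative (v \<bullet> F k t)) (at t)"
      by (rule bounded_linear.has_vector_derivative[OF bounded_linear_inner_right])
    then show "((\<lambda>t. v \<bullet> x k t) has_real_derivative (v \<bullet> F k t)) (at t)"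
      by (simp add: has_real_derivative_iff_has_vector_derivative)
  qed
  have strict: "v \<bullet> x k' t < M + e * exp (t - c)"
    if e: "e > 0" and k': "k' \<in> {1..N}" and t: "t \<ge> a" for e k' t
  proof (rule ccontr)
    assume neg: "\<not> v \<bullet> x k' t < M + e * exp (t - c)"
    define b where "b r = M + e * exp (r - c)" for r
    have bmono: "\<And>r s. r \<le> s \<Longrightarrow> b r \<le> b s" using e by (simp add: b_def)
    have below: "\<And>k r. k \<in> {1..N} \<Longrightarrow> a \<le> r \<Longrightarrow> r \<le> c \<Longrightarrow> v \<bullet> x k r < b r"
    proof -
      fix k r assume "k \<in> {1..N}" "a \<le> r" "r \<le> c"
      then have "v \<bullet> x k r \<le> M" by (rule bd')
      moreover have "e * exp (r - c) > 0" using e by simp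
      ultimately show "v \<bullet> x k r < b r" by (simp add: b_def)
    qed
    define S where "S = {t. t \<ge> c \<and> (\<exists>k\<in>{1..N}. v \<bullet> x k t \<ge> b t)}"
    have tc: "t > c" using below[OF k' t] neg by (force simp: b_def)
    have "t \<in> S" using tc neg k' unfolding S_def b_def by (intro CollectI conjI bexI[of _ k']) auto
    then have Sne: "S \<noteq> {}" by auto
    have bddS: "bdd_below S" unfolding S_def by (rule bdd_belowI[of _ c]) auto
    have clS: "closed S"
    proof -
      have "S = (\<Union>k\<in>{1..N}. {c..} \<inter> (\<lambda>t. b t - v \<bullet> x k t) -` {..0})"
        by (auto simp: S_def)
      moreover have "closed ({c..} \<inter> (\<lambda>t. b t - v \<bullet> x k t) -` {..0})" if "k \<in> {1..N}" for k
      proof (rule continuous_closed_preimage)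
        have "continuous_on {c..} (\<lambda>t. v \<bullet> x k t)"
          using cont[OF that] by (rule continuous_on_subset) (use tb c0 in auto)
        then show "continuous_on {c..} (\<lambda>t. b t - v \<bullet> x k t)"
          unfolding b_def by (auto intro!: continuous_intros)
      qed auto
      ultimately show ?thesis by (metis (no_types, lifting) closed_UN finite_atLeastAtMost)
    qed
    define t0 where "t0 = Inf S"
    have t0S: "t0 \<in> S" unfolding t0_def using Sne bddS clS by (rule closed_contains_Inf)
    then obtain i where i: "i \<in> {1..N}" and it0: "v \<bullet> x i t0 \<ge> b t0" and t0c: "t0 \<ge> c"
      by (auto simp: S_def)
    have ac: "a < c" using tb by (simp add: a_def)
    have t0gt: "t0 > c"
      using below[OF i _ order_refl] it0 t0c ac by (cases "t0 = c") auto
    have before: "\<And>k r. k \<in> {1..N} \<Longrightarrow> c \<le> r \<Longrightarrow> r < t0 \<Longrightarrow> v \<bullet> x k r < b r"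
    proof (rule ccontr)
      fix k r assume "k \<in> {1..N}" "c \<le> r" "r < t0" "\<not> v \<bullet> x k r < b r"
      then show False
      proof -
      have "r \<in> S" unfolding S_def using \<open>k \<in> {1..N}\<close> \<open>c \<le> r\<close> \<open>\<not> v \<bullet> x k r < b r\<close>
        by (intro CollectI conjI bexI[of _ k]) auto
      then have "t0 \<le> r" unfolding t0_def using bddS by (rule cInf_lower)
      then show False using \<open>r < t0\<close> by simp
      qed
    qed
    have all_le: "v \<bullet> x k r \<le> b t0" if k: "k \<in> {1..N}" and r: "a \<le> r" "r \<le> t0" for k r
    proof (cases "r < t0")
      case True
      show ?thesis
      proof (cases "r \<le> c")
        case True then show ?thesis using below[OF k r(1)] bmono[of r t0] r by auto
      next
        case False then show ?thesis using before[OF k _ \<open>r < t0\<close>] bmono[of r t0] r by auto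
      qed
    next
      case False
      then have rt: "r = t0" using r by simp
      have "t0 \<in> interior {-taubar..}" using t0gt c0 tb by auto
      then have ic: "isCont (\<lambda>t. v \<bullet> x k t - b t) t0"
        using cont[OF k] unfolding b_def
        by (intro continuous_on_interior[of "{-taubar..}"]) (auto intro!: continuous_intros)
      then have lim: "((\<lambda>t. v \<bullet> x k t - b t) \<longlongrightarrow> v \<bullet> x k t0 - b t0) (at_left t0)"
        unfolding isCont_def by (rule filterlim_mono) (auto simp: at_le)
      have ev: "eventually (\<lambda>t. v \<bullet> x k t - b t \<le> 0) (at_left t0)"
        using eventually_at_left_real[OF t0gt]
        by (rule eventually_mono) (use before[OF k] in \<open>fastforce simp: less_imp_le\<close>)
      have "v \<bullet> x k t0 - b t0 \<le> 0"
        by (rule tendsto_upperbound[OF lim ev]) simp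
      then show ?thesis using rt by simp
    qed
    have ieq: "v \<bullet> x i t0 = b t0" using all_le[OF i _ order_refl] it0 ac t0gt by force
    define s0 where "s0 = t0 - tau t0"
    have t00: "t0 > 0" using t0gt c0 by simp
    have s0r: "a \<le> s0" "s0 \<le> t0" using tau[of t0] t00 t0gt by (auto simp: s0_def a_def)
    have Nr: "real N - 1 > 0" using N2 by simp
    have "v \<bullet> F i t0 = (1 / (real N - 1)) *
        (\<Sum>j\<in>{1..N}-{i}. psi (x i t0) (x j s0) * (v \<bullet> x j s0 - v \<bullet> x i t0))"
      by (simp add: F_def s0_def inner_sum_right inner_diff_right)
    also have "\<dots> \<le> 0"
    proof -
      have "(\<Sum>j\<in>{1..N}-{i}. psi (x i t0) (x j s0) * (v \<bullet> x j s0 - v \<bullet> x i t0)) \<le> 0"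
      proof (rule sum_nonpos)
        fix j assume "j \<in> {1..N}-{i}"
        then have "v \<bullet> x j s0 - v \<bullet> x i t0 \<le> 0" using all_le[of j s0] s0r ieq by auto
        then show "psi (x i t0) (x j s0) * (v \<bullet> x j s0 - v \<bullet> x i t0) \<le> 0"
          using pos[of "x i t0" "x j s0"] by (simp add: mult_nonneg_nonpos less_imp_le)
      qed
      then show ?thesis using Nr by (simp add: divide_nonpos_nonneg[of _ "real N - 1"] mult_nonneg_nonpos)
    qed
    finally have Fle: "v \<bullet> F i t0 \<le> 0" .
    have dg: "((\<lambda>t. v \<bullet> x i t - b t) has_real_derivative (v \<bullet> F i t0 - e * exp (t0 - c))) (at t0)"
      unfolding b_def using der[OF i t00] by (auto intro!: derivative_eq_intros)
    have "v \<bullet> F i t0 - e * exp (t0 - c) < 0" using Fle e mult_pos_pos[OF e exp_gt_zero[of "t0 - c"]] by linarith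
    from DERIV_neg_dec_left[OF dg this] obtain d where d: "d > 0"
      and dd: "\<And>h. h > 0 \<Longrightarrow> h < d \<Longrightarrow> v \<bullet> x i t0 - b t0 < v \<bullet> x i (t0 - h) - b (t0 - h)" by auto
    define h where "h = min (d/2) ((t0 - c)/2)"
    have h: "h > 0" "h < d" "t0 - h \<ge> c" "t0 - h < t0" using d t0gt unfolding h_def by (auto simp: min_def field_simps)
    have "v \<bullet> x i (t0 - h) - b (t0 - h) > 0" using dd[OF h(1,2)] ieq by simp
    moreover have "v \<bullet> x i (t0 - h) < b (t0 - h)" using before[OF i h(3,4)] .
    ultimately show False by simp
  qed
  show ?thesis
  proof (rule ccontr)
    assume "\<not> v \<bullet> x k r \<le> M"
    then have g: "v \<bullet> x k r - M > 0" by simp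
    define e where "e = (v \<bullet> x k r - M) / (2 * exp (r - c))"
    have e: "e > 0" using g by (simp add: e_def)
    have ee: "e * exp (r - c) = (v \<bullet> x k r - M) / 2" by (simp add: e_def)
    have "v \<bullet> x k r < M + e * exp (r - c)"
      using strict[OF e kk] rr by (simp add: a_def c_def)
    then have "v \<bullet> x k r < M + (v \<bullet> x k r - M) / 2" by (simp only: ee)
    then show False using g by (simp add: field_simps)
  qed
qed


lemma le_D:
  fixes x :: "nat \<Rightarrow> real \<Rightarrow> 'a::euclidean_space"
  assumes tb: "taubar > 0"
    and cont: "\<And>i. i \<in> {1..N} \<Longrightarrow> continuous_on {-taubar..} (x i)"
    and ij: "i \<in> {1..N}" "j \<in> {1..N}"
    and st: "s \<in> {real n * taubar - taubar .. real n * taubar}" "t \<in> {real n * taubar - taubar .. real n * taubar}"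
  shows "norm (x i s - x j t) \<le> diamD N taubar x n"
proof -
  define a where "a = real n * taubar - taubar"
  define c where "c = real n * taubar"
  have sub: "{a..c} \<subseteq> {-taubar..}" using tb by (auto simp: a_def)
  have "\<forall>i\<in>{1..N}. \<exists>B. \<forall>s\<in>{a..c}. norm (x i s) \<le> B"
  proof
    fix i assume i: "i \<in> {1..N}"
    have "compact (x i ` {a..c})"
      by (rule compact_continuous_image[OF continuous_on_subset[OF cont[OF i] sub]]) simp
    then have "bounded (x i ` {a..c})" by (rule compact_imp_bounded)
    then show "\<exists>B. \<forall>s\<in>{a..c}. norm (x i s) \<le> B" by (auto simp: bounded_iff)
  qed
  then obtain Bf where Bf: "\<And>i s. i \<in> {1..N} \<Longrightarrow> s \<in> {a..c} \<Longrightarrow> norm (x i s) \<le> Bf i"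
    by metis
  define B where "B = (\<Sum>i\<in>{1..N}. \<bar>Bf i\<bar>)"
  have nB: "norm (x i s) \<le> B" if "i \<in> {1..N}" "s \<in> {a..c}" for i s
  proof -
    have "\<bar>Bf i\<bar> \<le> B" unfolding B_def by (rule member_le_sum) (use that in auto)
    then show ?thesis using Bf[OF that] by linarith
  qed
  define P where "P = {1..N} \<times> {1..N} \<times> {a..c} \<times> {a..c}"
  define f where "f = (\<lambda>p. case p of (i, j, s, t) \<Rightarrow> norm (x i s - x j t))"
  have bdd: "bdd_above (f ` P)"
  proof (rule bdd_aboveI2)
    fix p assume "p \<in> P"
    then obtain i j s t where p: "p = (i,j,s,t)" "i \<in> {1..N}" "j \<in> {1..N}" "s \<in> {a..c}" "t \<in> {a..c}"
      by (auto simp: P_def)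
    have "norm (x i s - x j t) \<le> norm (x i s) + norm (x j t)" by (rule norm_triangle_ineq4)
    also have "\<dots> \<le> B + B" using nB[OF p(2,4)] nB[OF p(3,5)] by linarith
    finally show "f p \<le> B + B" by (simp add: f_def p)
  qed
  have "f (i,j,s,t) \<le> Sup (f ` P)"
    by (rule cSUP_upper[OF _ bdd]) (use ij st in \<open>auto simp: P_def a_def c_def\<close>)
  then show ?thesis by (simp add: diamD_def f_def P_def a_def c_def)
qed

theorem lemma2p2:
  fixes N :: nat and taubar :: real and tau :: "real \<Rightarrow> real"
    and psi :: "'a::euclidean_space \<Rightarrow> 'a \<Rightarrow> real"
    and x0 x :: "nat \<Rightarrow> real \<Rightarrow> 'a"
  assumes "N \<ge> 2" and "taubar > 0"
    and "continuous_on {0..} tau" and "\<And>t. t \<ge> 0 \<Longrightarrow> 0 \<le> tau t \<and> tau t \<le> taubar"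
    and "continuous_on UNIV (\<lambda>p. psi (fst p) (snd p))"
    and "bounded (range (\<lambda>p. psi (fst p) (snd p)))"
    and "\<And>u v. psi u v > 0"
    and "\<And>i. i \<in> {1..N} \<Longrightarrow> continuous_on {-taubar..0} (x0 i)"
    and "dHK_solution N taubar tau psi x0 x"
  shows "(\<forall>n::nat. \<forall>i\<in>{1..N}. \<forall>j\<in>{1..N}. \<forall>s t.
            s \<ge> real n * taubar - taubar \<longrightarrow> t \<ge> real n * taubar - taubar \<longrightarrow>
            norm (x i s - x j t) \<le> diamD N taubar x n)
       \<and> (\<forall>i\<in>{1..N}. \<forall>j\<in>{1..N}. \<forall>s t. s \<ge> - taubar \<longrightarrow> t \<ge> - taubar \<longrightarrow>
            norm (x i s - x j t) \<le> diamD N taubar x 0)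
       \<and> (\<forall>n::nat. diamD N taubar x (n + 1) \<le> diamD N taubar x n)"
proof -
  note N2 = assms(1) and tb = assms(2) and tau = assms(4) and pos = assms(7) and sol = assms(9)
  have cont: "\<And>i. i \<in> {1..N} \<Longrightarrow> continuous_on {-taubar..} (x i)"
    using sol unfolding dHK_solution_def by auto
  have P1: "norm (x i s - x j t) \<le> diamD N taubar x n"
    if i: "i \<in> {1..N}" and j: "j \<in> {1..N}" and s: "s \<ge> real n * taubar - taubar"
      and t: "t \<ge> real n * taubar - taubar" for n i j s t
  proof -
    define D where "D = diamD N taubar x n"
    define w where "w = x i s - x j t"
    have leD: "\<And>k r k' r'. k \<in> {1..N} \<Longrightarrow> k' \<in> {1..N} \<Longrightarrow>
        r \<in> {real n * taubar - taubar .. real n * taubar} \<Longrightarrow>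
        r' \<in> {real n * taubar - taubar .. real n * taubar} \<Longrightarrow> norm (x k r - x k' r') \<le> D"
      unfolding D_def by (rule le_D[OF tb cont]) auto
    have CS: "w \<bullet> (x k r - x k' r') \<le> norm w * D" if "k \<in> {1..N}" "k' \<in> {1..N}"
        "r \<in> {real n * taubar - taubar .. real n * taubar}"
        "r' \<in> {real n * taubar - taubar .. real n * taubar}" for k r k' r'
    proof -
      have "w \<bullet> (x k r - x k' r') \<le> norm w * norm (x k r - x k' r')" by (rule norm_cauchy_schwarz)
      also have "\<dots> \<le> norm w * D" by (rule mult_left_mono[OF leD[OF that]]) simp
      finally show ?thesis .
    qed
    have step1: "w \<bullet> x k r - w \<bullet> x j' t' \<le> norm w * D"
      if k: "k \<in> {1..N}" and r: "r \<in> {real n * taubar - taubar .. real n * taubar}"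
        and j': "j' \<in> {1..N}" and t': "t' \<ge> real n * taubar - taubar" for k r j' t'
    proof -
      have "(-w) \<bullet> x j' t' \<le> - (w \<bullet> x k r) + norm w * D"
      proof (rule barrier[OF N2 tb tau pos sol _ j' t'])
        fix k'' r'' assume "k'' \<in> {1..N}" "r'' \<in> {real n * taubar - taubar .. real n * taubar}"
        then have "w \<bullet> (x k r - x k'' r'') \<le> norm w * D" using CS k r by blast
        then show "(-w) \<bullet> x k'' r'' \<le> - (w \<bullet> x k r) + norm w * D"
          by (simp add: inner_diff_right)
      qed auto
      then show ?thesis by simp
    qed
    have "w \<bullet> x i s \<le> w \<bullet> x j t + norm w * D"
    proof (rule barrier[OF N2 tb tau pos sol _ i s])
      fix k r assume "k \<in> {1..N}" "r \<in> {real n * taubar - taubar .. real n * taubar}"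
      then show "w \<bullet> x k r \<le> w \<bullet> x j t + norm w * D" using step1[OF _ _ j t] by fastforce
    qed auto
    then have "w \<bullet> w \<le> norm w * D" by (simp add: w_def inner_diff_right)
    then have sq: "norm w * norm w \<le> norm w * D" by (simp add: dot_square_norm power2_eq_square)
    show ?thesis
    proof (cases "w = 0")
      case True
      have "1 \<in> {1..N}" using N2 by simp
      have "norm (x 1 (real n * taubar) - x 1 (real n * taubar)) \<le> D"
        by (rule leD[OF \<open>1 \<in> {1..N}\<close> \<open>1 \<in> {1..N}\<close>]) (use tb in auto)
      then show ?thesis using True by (simp add: D_def w_def)
    next
      case False
      then have "norm w > 0" by simp
      with sq have "norm w \<le> D" by (simp add: mult_le_cancel_left_pos)
      then show ?thesis by (simp add: D_def w_def)
    qed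
  qed
  have P3: "diamD N taubar x (n + 1) \<le> diamD N taubar x n" for n
  proof -
    have ne: "{1..N} \<times> {1..N} \<times> {real (n+1) * taubar - taubar .. real (n+1) * taubar} \<times>
        {real (n+1) * taubar - taubar .. real (n+1) * taubar} \<noteq> {}"
      using N2 tb by auto
    show ?thesis unfolding diamD_def[of N taubar x "n+1"]
    proof (rule cSUP_least[OF ne])
      fix p assume "p \<in> {1..N} \<times> {1..N} \<times> {real (n+1) * taubar - taubar .. real (n+1) * taubar} \<times>
        {real (n+1) * taubar - taubar .. real (n+1) * taubar}"
      then obtain i j s t where p: "p = (i,j,s,t)" "i \<in> {1..N}" "j \<in> {1..N}"
        "s \<ge> real n * taubar" "t \<ge> real n * taubar"
        by (auto simp: algebra_simps)
      have "norm (x i s - x j t) \<le> diamD N taubar x n"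
        by (rule P1) (use p tb in auto)
      then show "(case p of (i, j, s, t) \<Rightarrow> norm (x i s - x j t)) \<le> diamD N taubar x n"
        by (simp add: p)
    qed
  qed
  show ?thesis
    using P1[of _ _ _ 0] P1 P3 by auto
qed

end
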